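(* Let $(L,\le,\bot,\top)$ be a complete lattice and $(\&_i,\swarrow^i,\nwarrow_i)$, $i=1,\dots,n$, adjoint triples on $L$ with $x\,\&_i\,\top=\top\,\&_i\,x=x$ for all $x\in L$ and all $i$. Let $(A,B,R,\sigma)$ be a normalized context whose concept lattice $\mathcal{M}$ satisfies the ascending chain condition. If the context has a decomposition into independent subcontexts, then $\mathcal{M}$ has a decomposition into independent blocks. Specifically, if $\{(A_\lambda,B_\lambda,R_\lambda,\sigma_\lambda)\mid\lambda\in\Lambda\}$ is a decomposition into independent subcontexts, then the family $\{K_\lambda\}_{\lambda\in\Lambda}$ with $$K_\lambda=\{\langle g,f\rangle\in\mathcal{M}\mid\langle g,f\rangle=\textstyle\bigwedge M_g^{A_\lambda}\}\cup\{\langle g_\top,f_\bot\rangle,\langle g_\bot,f_\top\rangle\}$$ is a decomposition of $\mathcal{M}$ into independent blocks.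
   Context: An adjoint triple on $L$ is a triple of maps $\&,\swarrow,\nwarrow\colon L\times L\to L$ with $x\le z\swarrow y\iff x\& y\le z\iff y\le z\nwarrow x$. A context is $(A,B,R,\sigma)$ with $A,B$ non-empty, $R\colon A\times B\to L$, $\sigma\colon A\times B\to\{1,\dots,n\}$; normalized means every $a\in A$ has $b_1,b_2$ with $R(a,b_1)\ne\bot$, $R(a,b_2)=\bot$, and every $b\in B$ has $a_1,a_2$ with $R(a_1,b)\ne\bot$, $R(a_2,b)=\bot$. For $g\colon B\to L$, $f\colon A\to L$: $g^\uparrow(a)=\inf_{b}R(a,b)\swarrow^{\sigma(a,b)}g(b)$, $f^\downarrow(b)=\inf_{a}R(a,b)\nwarrow_{\sigma(a,b)}f(a)$. $\mathcal{M}$ is the complete lattice of pairs $\langle g,f\rangle$ with $g^\uparrow=f$, $f^\downarrow=g$, ordered by $g_1\le g_2$ pointwise; top $\langle g_\top,f_\bot\rangle$, bottom $\langle g_\bot,f_\top\rangle$ ($g_\top,g_\bot,f_\top,f_\bot$ constant maps). $\phi_{a,x}\colon A\to L$ takes value $x$ at $a$ and $\bot$ elsewhere. Meet-irreducible concepts (elements $c\ne$ top with $c=d\wedge e\Rightarrow c\in\{d,e\}$) all have the form $\langle\phi_{a,x}^\downarrow,\phi_{a,x}^{\downarrow\uparrow}\rangle$. For $A'\subseteq A$, $M_F^{A'}$ is the set of meet-irreducible concepts equal to $\langle\phi_{a,x}^\downarrow,\phi_{a,x}^{\downarrow\uparrow}\rangle$ for some $a\in A'$, $x\in L$, and $M_g^{A'}=\{c\in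 M_F^{A'}\mid\langle g,f\rangle\preceq c\}$. Separable subcontext: $(Y,X,R_{Y\times X},\sigma_{Y\times X})$ with $Y\subsetneq A$, $X\subsetneq B$ non-empty, some $R(a,b)\ne\bot$ with $a\in Y,b\in X$, $R=\bot$ on $Y\times(B\setminus X)$ and on $(A\setminus Y)\times X$. $\&$ has zero-divisors if $x\&y=\bot$ for some $x,y\ne\bot$. Decomposition into independent subcontexts: non-empty $\Lambda$, each $(A_\lambda,B_\lambda,R_\lambda,\sigma_\lambda)$ (restrictions) separable, $\{A_\lambda\}$ partitions $A$, $\{B_\lambda\}$ partitions $B$, and $\&_{\sigma(a,b)}$ has no zero-divisors whenever $(a,b)\in((A\setminus A_\lambda)\times B_\lambda)\cup(A_\lambda\times(B\setminus B_\lambda))$ for some $\lambda$. For a bounded lattice $(M,\preceq,\bot,\top)$, a block is a sublattice $K\subsetneq M$ with $K\setminus\{\bot,\top\}\ne\varnothing$ and $(\{x\mid k\preceq x\}\cup\{x\mid x\preceq k\})\setminus\{\bot,\top\}\subseteq K$ for all $k\in K\setminus\{\bot,\top\}$. Blocks $K_1,K_2$ are independent if $K_1\cap K_2\subseteq\{\bot,\top\}$. $M$ has a decomposition into independent blocks if there is a family of pairwise independent blocks whose union is $M$. *)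

theory Defs
  imports Main
begin

text \<open>A context is given by A, B, R, sigma; the adjoint triples by
  conj i, impL i (written z \<swarrow>^i y in the paper, called as impL i z y)
  and impR i (written z \<nwarrow>_i x in the paper, called as impR i z x).
  Maps g : B \<rightarrow> L and f : A \<rightarrow> L are represented as total functions
  that are \<bottom> outside B resp. A.\<close>

definition adjoint_triple ::
  "('l::complete_lattice \<Rightarrow> 'l \<Rightarrow> 'l) \<Rightarrow> ('l \<Rightarrow> 'l \<Rightarrow> 'l) \<Rightarrow> ('l \<Rightarrow> 'l \<Rightarrow> 'l) \<Rightarrow> bool" where
  "adjoint_triple cj iL iR \<longleftrightarrow>
     (\<forall>x y z. (x \<le> iL z y \<longleftrightarrow> cj x y \<le> z) \<and> (cj x y \<le> z \<longleftrightarrow> y \<le> iR z x))"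

definition normalized_context :: "'a set \<Rightarrow> 'b set \<Rightarrow> ('a \<Rightarrow> 'b \<Rightarrow> 'l::complete_lattice) \<Rightarrow> bool" where
  "normalized_context A B R \<longleftrightarrow>
     (\<forall>a\<in>A. (\<exists>b1\<in>B. R a b1 \<noteq> bot) \<and> (\<exists>b2\<in>B. R a b2 = bot)) \<and>
     (\<forall>b\<in>B. (\<exists>a1\<in>A. R a1 b \<noteq> bot) \<and> (\<exists>a2\<in>A. R a2 b = bot))"

definition up ::
  "(nat \<Rightarrow> 'l \<Rightarrow> 'l \<Rightarrow> 'l) \<Rightarrow> 'a set \<Rightarrow> 'b set \<Rightarrow> ('a \<Rightarrow> 'b \<Rightarrow> 'l::complete_lattice)
     \<Rightarrow> ('a \<Rightarrow> 'b \<Rightarrow> nat) \<Rightarrow> ('b \<Rightarrow> 'l) \<Rightarrow> 'a \<Rightarrow> 'l" where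
  "up iL A B R \<sigma> g = (\<lambda>a. if a \<in> A then (INF b\<in>B. iL (\<sigma> a b) (R a b) (g b)) else bot)"

definition down ::
  "(nat \<Rightarrow> 'l \<Rightarrow> 'l \<Rightarrow> 'l) \<Rightarrow> 'a set \<Rightarrow> 'b set \<Rightarrow> ('a \<Rightarrow> 'b \<Rightarrow> 'l::complete_lattice)
     \<Rightarrow> ('a \<Rightarrow> 'b \<Rightarrow> nat) \<Rightarrow> ('a \<Rightarrow> 'l) \<Rightarrow> 'b \<Rightarrow> 'l" where
  "down iR A B R \<sigma> f = (\<lambda>b. if b \<in> B then (INF a\<in>A. iR (\<sigma> a b) (R a b) (f a)) else bot)"

definition concepts ::
  "(nat \<Rightarrow> 'l \<Rightarrow> 'l \<Rightarrow> 'l) \<Rightarrow> (nat \<Rightarrow> 'l \<Rightarrow> 'l \<Rightarrow> 'l) \<Rightarrow> 'a set \<Rightarrow> 'b set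
     \<Rightarrow> ('a \<Rightarrow> 'b \<Rightarrow> 'l::complete_lattice) \<Rightarrow> ('a \<Rightarrow> 'b \<Rightarrow> nat) \<Rightarrow> (('b \<Rightarrow> 'l) \<times> ('a \<Rightarrow> 'l)) set" where
  "concepts iL iR A B R \<sigma> = {(g, f). up iL A B R \<sigma> g = f \<and> down iR A B R \<sigma> f = g}"

definition cleq :: "('b \<Rightarrow> 'l::complete_lattice) \<times> ('a \<Rightarrow> 'l) \<Rightarrow> ('b \<Rightarrow> 'l) \<times> ('a \<Rightarrow> 'l) \<Rightarrow> bool" where
  "cleq c d \<longleftrightarrow> fst c \<le> fst d"

definition ctop :: "'a set \<Rightarrow> 'b set \<Rightarrow> ('b \<Rightarrow> 'l::complete_lattice) \<times> ('a \<Rightarrow> 'l)" where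
  "ctop A B = ((\<lambda>b. if b \<in> B then top else bot), (\<lambda>a. bot))"

definition cbot :: "'a set \<Rightarrow> 'b set \<Rightarrow> ('b \<Rightarrow> 'l::complete_lattice) \<times> ('a \<Rightarrow> 'l)" where
  "cbot A B = ((\<lambda>b. bot), (\<lambda>a. if a \<in> A then top else bot))"

definition glb_in :: "('c \<Rightarrow> 'c \<Rightarrow> bool) \<Rightarrow> 'c set \<Rightarrow> 'c set \<Rightarrow> 'c \<Rightarrow> bool" where
  "glb_in le M S c \<longleftrightarrow> c \<in> M \<and> (\<forall>d\<in>S. le c d) \<and> (\<forall>e\<in>M. (\<forall>d\<in>S. le e d) \<longrightarrow> le e c)"

definition lub_in :: "('c \<Rightarrow> 'c \<Rightarrow> bool) \<Rightarrow> 'c set \<Rightarrow> 'c set \<Rightarrow> 'c \<Rightarrow> bool" where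
  "lub_in le M S c \<longleftrightarrow> c \<in> M \<and> (\<forall>d\<in>S. le d c) \<and> (\<forall>e\<in>M. (\<forall>d\<in>S. le d e) \<longrightarrow> le c e)"

definition ascending_chain_condition :: "('c \<Rightarrow> 'c \<Rightarrow> bool) \<Rightarrow> 'c set \<Rightarrow> bool" where
  "ascending_chain_condition le M \<longleftrightarrow>
     \<not> (\<exists>c :: nat \<Rightarrow> 'c. \<forall>k. c k \<in> M \<and> le (c k) (c (Suc k)) \<and> c k \<noteq> c (Suc k))"

definition meet_irreducible_in :: "('c \<Rightarrow> 'c \<Rightarrow> bool) \<Rightarrow> 'c set \<Rightarrow> 'c \<Rightarrow> 'c \<Rightarrow> bool" where
  "meet_irreducible_in le M tp c \<longleftrightarrow> c \<in> M \<and> c \<noteq> tp \<and>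
     (\<forall>d\<in>M. \<forall>e\<in>M. glb_in le M {d, e} c \<longrightarrow> c = d \<or> c = e)"

definition sublattice_in :: "('c \<Rightarrow> 'c \<Rightarrow> bool) \<Rightarrow> 'c set \<Rightarrow> 'c set \<Rightarrow> bool" where
  "sublattice_in le M K \<longleftrightarrow> K \<subseteq> M \<and>
     (\<forall>x\<in>K. \<forall>y\<in>K. \<forall>z. glb_in le M {x, y} z \<longrightarrow> z \<in> K) \<and>
     (\<forall>x\<in>K. \<forall>y\<in>K. \<forall>z. lub_in le M {x, y} z \<longrightarrow> z \<in> K)"

definition block_in :: "('c \<Rightarrow> 'c \<Rightarrow> bool) \<Rightarrow> 'c set \<Rightarrow> 'c \<Rightarrow> 'c \<Rightarrow> 'c set \<Rightarrow> bool" where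
  "block_in le M bt tp K \<longleftrightarrow> sublattice_in le M K \<and> K \<subset> M \<and> K - {bt, tp} \<noteq> {} \<and>
     (\<forall>k\<in>K - {bt, tp}. ({x\<in>M. le k x} \<union> {x\<in>M. le x k}) - {bt, tp} \<subseteq> K)"

definition independent_blocks :: "'c \<Rightarrow> 'c \<Rightarrow> 'c set \<Rightarrow> 'c set \<Rightarrow> bool" where
  "independent_blocks bt tp K1 K2 \<longleftrightarrow> K1 \<inter> K2 \<subseteq> {bt, tp}"

definition block_decomposition_family ::
  "('c \<Rightarrow> 'c \<Rightarrow> bool) \<Rightarrow> 'c set \<Rightarrow> 'c \<Rightarrow> 'c \<Rightarrow> 'i set \<Rightarrow> ('i \<Rightarrow> 'c set) \<Rightarrow> bool" where
  "block_decomposition_family le M bt tp I K \<longleftrightarrow>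
     (\<forall>i\<in>I. block_in le M bt tp (K i)) \<and>
     (\<forall>i\<in>I. \<forall>j\<in>I. i \<noteq> j \<longrightarrow> independent_blocks bt tp (K i) (K j)) \<and>
     (\<Union>i\<in>I. K i) = M"

definition has_block_decomposition :: "('c \<Rightarrow> 'c \<Rightarrow> bool) \<Rightarrow> 'c set \<Rightarrow> 'c \<Rightarrow> 'c \<Rightarrow> bool" where
  "has_block_decomposition le M bt tp \<longleftrightarrow>
     (\<exists>\<K>. (\<forall>K\<in>\<K>. block_in le M bt tp K) \<and>
          (\<forall>K1\<in>\<K>. \<forall>K2\<in>\<K>. K1 \<noteq> K2 \<longrightarrow> independent_blocks bt tp K1 K2) \<and>
          \<Union>\<K> = M)"

definition no_zero_divisors :: "('l::complete_lattice \<Rightarrow> 'l \<Rightarrow> 'l) \<Rightarrow> bool" where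
  "no_zero_divisors cj \<longleftrightarrow> (\<forall>x y. x \<noteq> bot \<longrightarrow> y \<noteq> bot \<longrightarrow> cj x y \<noteq> bot)"

definition separable_subcontext ::
  "'a set \<Rightarrow> 'b set \<Rightarrow> ('a \<Rightarrow> 'b \<Rightarrow> 'l::complete_lattice) \<Rightarrow> 'a set \<Rightarrow> 'b set \<Rightarrow> bool" where
  "separable_subcontext A B R Y X \<longleftrightarrow>
     Y \<subset> A \<and> X \<subset> B \<and> Y \<noteq> {} \<and> X \<noteq> {} \<and>
     (\<exists>a\<in>Y. \<exists>b\<in>X. R a b \<noteq> bot) \<and>
     (\<forall>a\<in>Y. \<forall>b\<in>B - X. R a b = bot) \<and>
     (\<forall>a\<in>A - Y. \<forall>b\<in>X. R a b = bot)"

definition independent_subcontext_decomposition ::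
  "(nat \<Rightarrow> 'l \<Rightarrow> 'l \<Rightarrow> 'l) \<Rightarrow> 'a set \<Rightarrow> 'b set \<Rightarrow> ('a \<Rightarrow> 'b \<Rightarrow> 'l::complete_lattice)
     \<Rightarrow> ('a \<Rightarrow> 'b \<Rightarrow> nat) \<Rightarrow> 'i set \<Rightarrow> ('i \<Rightarrow> 'a set) \<Rightarrow> ('i \<Rightarrow> 'b set) \<Rightarrow> bool" where
  "independent_subcontext_decomposition cj A B R \<sigma> \<Lambda> AL BL \<longleftrightarrow>
     \<Lambda> \<noteq> {} \<and>
     (\<forall>l\<in>\<Lambda>. separable_subcontext A B R (AL l) (BL l)) \<and>
     (\<Union>l\<in>\<Lambda>. AL l) = A \<and> (\<forall>l\<in>\<Lambda>. \<forall>m\<in>\<Lambda>. l \<noteq> m \<longrightarrow> AL l \<inter> AL m = {}) \<and>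
     (\<Union>l\<in>\<Lambda>. BL l) = B \<and> (\<forall>l\<in>\<Lambda>. \<forall>m\<in>\<Lambda>. l \<noteq> m \<longrightarrow> BL l \<inter> BL m = {}) \<and>
     (\<forall>l\<in>\<Lambda>. \<forall>(a, b) \<in> ((A - AL l) \<times> BL l) \<union> (AL l \<times> (B - BL l)).
        no_zero_divisors (cj (\<sigma> a b)))"

definition phi :: "'a \<Rightarrow> 'l::complete_lattice \<Rightarrow> 'a \<Rightarrow> 'l" where
  "phi a x = (\<lambda>a'. if a' = a then x else bot)"

definition MF ::
  "(nat \<Rightarrow> 'l \<Rightarrow> 'l \<Rightarrow> 'l) \<Rightarrow> (nat \<Rightarrow> 'l \<Rightarrow> 'l \<Rightarrow> 'l) \<Rightarrow> 'a set \<Rightarrow> 'b set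
     \<Rightarrow> ('a \<Rightarrow> 'b \<Rightarrow> 'l::complete_lattice) \<Rightarrow> ('a \<Rightarrow> 'b \<Rightarrow> nat) \<Rightarrow> 'a set \<Rightarrow> (('b \<Rightarrow> 'l) \<times> ('a \<Rightarrow> 'l)) set" where
  "MF iL iR A B R \<sigma> A' =
     {c. meet_irreducible_in cleq (concepts iL iR A B R \<sigma>) (ctop A B) c \<and>
         (\<exists>a\<in>A'. \<exists>x. c = (down iR A B R \<sigma> (phi a x), up iL A B R \<sigma> (down iR A B R \<sigma> (phi a x))))}"

definition Mg ::
  "(nat \<Rightarrow> 'l \<Rightarrow> 'l \<Rightarrow> 'l) \<Rightarrow> (nat \<Rightarrow> 'l \<Rightarrow> 'l \<Rightarrow> 'l) \<Rightarrow> 'a set \<Rightarrow> 'b set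
     \<Rightarrow> ('a \<Rightarrow> 'b \<Rightarrow> 'l::complete_lattice) \<Rightarrow> ('a \<Rightarrow> 'b \<Rightarrow> nat) \<Rightarrow> 'a set
     \<Rightarrow> ('b \<Rightarrow> 'l) \<times> ('a \<Rightarrow> 'l) \<Rightarrow> (('b \<Rightarrow> 'l) \<times> ('a \<Rightarrow> 'l)) set" where
  "Mg iL iR A B R \<sigma> A' gf = {c \<in> MF iL iR A B R \<sigma> A'. cleq gf c}"

definition Kset ::
  "(nat \<Rightarrow> 'l \<Rightarrow> 'l \<Rightarrow> 'l) \<Rightarrow> (nat \<Rightarrow> 'l \<Rightarrow> 'l \<Rightarrow> 'l) \<Rightarrow> 'a set \<Rightarrow> 'b set
     \<Rightarrow> ('a \<Rightarrow> 'b \<Rightarrow> 'l::complete_lattice) \<Rightarrow> ('a \<Rightarrow> 'b \<Rightarrow> nat) \<Rightarrow> 'a set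
     \<Rightarrow> (('b \<Rightarrow> 'l) \<times> ('a \<Rightarrow> 'l)) set" where
  "Kset iL iR A B R \<sigma> A' =
     {gf \<in> concepts iL iR A B R \<sigma>.
        glb_in cleq (concepts iL iR A B R \<sigma>) (Mg iL iR A B R \<sigma> A' gf) gf}
     \<union> {ctop A B, cbot A B}"

end

theory Submission
  imports Defs
begin

locale gcl =
  fixes n :: nat
    and cj iL iR :: "nat \<Rightarrow> 'l::complete_lattice \<Rightarrow> 'l \<Rightarrow> 'l"
    and A :: "'a set" and B :: "'b set"
    and R :: "'a \<Rightarrow> 'b \<Rightarrow> 'l" and \<sigma> :: "'a \<Rightarrow> 'b \<Rightarrow> nat"
  assumes adj: "\<forall>i\<in>{1..n}. adjoint_triple (cj i) (iL i) (iR i)"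
    and unit: "\<forall>i\<in>{1..n}. \<forall>x. cj i x top = x \<and> cj i top x = x"
    and sigma_range: "\<forall>a\<in>A. \<forall>b\<in>B. \<sigma> a b \<in> {1..n}"
    and normalized: "normalized_context A B R"
begin

abbreviation "M \<equiv> concepts iL iR A B R \<sigma>"
abbreviation "dn \<equiv> down iR A B R \<sigma>"
abbreviation "upp \<equiv> up iL A B R \<sigma>"
abbreviation "gam a x \<equiv> (dn (phi a x), upp (dn (phi a x)))"

lemma adjL: "a \<in> A \<Longrightarrow> b \<in> B \<Longrightarrow> x \<le> iL (\<sigma> a b) z y \<longleftrightarrow> cj (\<sigma> a b) x y \<le> z"
  using adj sigma_range unfolding adjoint_triple_def by blast
lemma adjR: "a \<in> A \<Longrightarrow> b \<in> B \<Longrightarrow> y \<le> iR (\<sigma> a b) z x \<longleftrightarrow> cj (\<sigma> a b) x y \<le> z"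
  using adj sigma_range unfolding adjoint_triple_def by blast
lemma unitI: "a \<in> A \<Longrightarrow> b \<in> B \<Longrightarrow> cj (\<sigma> a b) x top = x \<and> cj (\<sigma> a b) top x = x"
  using unit sigma_range by blast

lemma cj_bot1: "a \<in> A \<Longrightarrow> b \<in> B \<Longrightarrow> cj (\<sigma> a b) bot y = bot"
  using adjL[of a b bot z y for z] by (metis bot.extremum bot.extremum_unique)
lemma cj_bot2: "a \<in> A \<Longrightarrow> b \<in> B \<Longrightarrow> cj (\<sigma> a b) x bot = bot"
  using adjR[of a b bot z x for z] by (metis bot.extremum bot.extremum_unique)

lemma iR_bot: "a \<in> A \<Longrightarrow> b \<in> B \<Longrightarrow> iR (\<sigma> a b) z bot = top"
  by (metis adjR cj_bot1 bot.extremum top.extremum_unique)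
lemma iL_bot: "a \<in> A \<Longrightarrow> b \<in> B \<Longrightarrow> iL (\<sigma> a b) z bot = top"
  by (metis adjL cj_bot2 bot.extremum top.extremum_unique)
lemma iR_top: "a \<in> A \<Longrightarrow> b \<in> B \<Longrightarrow> iR (\<sigma> a b) z top = z"
  by (metis adjR unitI order.antisym order.refl)
lemma iL_top: "a \<in> A \<Longrightarrow> b \<in> B \<Longrightarrow> iL (\<sigma> a b) z top = z"
  by (metis adjL unitI order.antisym order.refl)

lemma cj_mono1: "a \<in> A \<Longrightarrow> b \<in> B \<Longrightarrow> x \<le> x' \<Longrightarrow> cj (\<sigma> a b) x y \<le> cj (\<sigma> a b) x' y"
  by (metis adjL order.refl order.trans)

lemma dn_out: "b \<notin> B \<Longrightarrow> dn f b = bot" by (simp add: down_def)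
lemma upp_out: "a \<notin> A \<Longrightarrow> upp g a = bot" by (simp add: up_def)

lemma dn_le: "a \<in> A \<Longrightarrow> b \<in> B \<Longrightarrow> dn f b \<le> iR (\<sigma> a b) (R a b) (f a)"
  unfolding down_def by (auto intro: INF_lower)
lemma upp_le: "a \<in> A \<Longrightarrow> b \<in> B \<Longrightarrow> upp g a \<le> iL (\<sigma> a b) (R a b) (g b)"
  unfolding up_def by (auto intro: INF_lower)

lemma f_le_updn: "a \<in> A \<Longrightarrow> f a \<le> upp (dn f) a"
  unfolding up_def by (auto intro!: INF_greatest simp: adjL adjR[symmetric] dn_le)

lemma g_le_dnup: "g b \<le> dn (upp g) b" if "\<forall>b. b \<notin> B \<longrightarrow> g b = bot"
  using that unfolding down_def by (auto intro!: INF_greatest simp: adjR adjL[symmetric] upp_le)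

lemma dn_anti: "(\<And>a. a \<in> A \<Longrightarrow> f a \<le> f' a) \<Longrightarrow> dn f' b \<le> dn f b"
proof (cases "b \<in> B")
  case True
  assume h: "\<And>a. a \<in> A \<Longrightarrow> f a \<le> f' a"
  show ?thesis unfolding down_def using True
  proof (simp, intro INF_greatest)
    fix a assume a: "a \<in> A"
    have "cj (\<sigma> a b) (f' a) (INF a\<in>A. iR (\<sigma> a b) (R a b) (f' a)) \<le> R a b"
      using a True adjR by (meson INF_lower)
    then have "cj (\<sigma> a b) (f a) (INF a\<in>A. iR (\<sigma> a b) (R a b) (f' a)) \<le> R a b"
      using cj_mono1[OF a True h[OF a]] order.trans by blast
    then show "(INF a\<in>A. iR (\<sigma> a b) (R a b) (f' a)) \<le> iR (\<sigma> a b) (R a b) (f a)"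
      using adjR a True by blast
  qed
qed (simp add: down_def)

lemma dnupdn: "dn (upp (dn f)) = dn f"
proof (rule ext, rule order.antisym)
  fix b show "dn (upp (dn f)) b \<le> dn f b" by (rule dn_anti) (rule f_le_updn)
  show "dn f b \<le> dn (upp (dn f)) b" by (rule g_le_dnup) (simp add: dn_out)
qed

lemma gam_M: "gam a x \<in> M"
  unfolding concepts_def by (simp add: dnupdn)

lemma M_D: "c \<in> M \<Longrightarrow> upp (fst c) = snd c \<and> dn (snd c) = fst c"
  unfolding concepts_def by auto

lemma M_eq: "c \<in> M \<Longrightarrow> d \<in> M \<Longrightarrow> fst c = fst d \<Longrightarrow> c = d"
  proof -
  assume h: "c \<in> M" "d \<in> M" "fst c = fst d"
  have "snd c = snd d" using M_D[OF h(1)] M_D[OF h(2)] h(3) by simp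
  then show ?thesis using h(3) by (simp add: prod_eq_iff)
qed

lemma M_fst_out: "c \<in> M \<Longrightarrow> b \<notin> B \<Longrightarrow> fst c b = bot"
  using M_D[of c] dn_out[of b] by metis
lemma M_snd_out: "c \<in> M \<Longrightarrow> a \<notin> A \<Longrightarrow> snd c a = bot"
  using M_D[of c] upp_out[of a] by metis

lemma cleq_antisym: "c \<in> M \<Longrightarrow> d \<in> M \<Longrightarrow> cleq c d \<Longrightarrow> cleq d c \<Longrightarrow> c = d"
  unfolding cleq_def by (metis M_eq order.antisym)

lemma dn_phi: "a \<in> A \<Longrightarrow> b \<in> B \<Longrightarrow> dn (phi a x) b = iR (\<sigma> a b) (R a b) x"
proof -
  assume a: "a \<in> A" and b: "b \<in> B"
  have "(INF a'\<in>A. iR (\<sigma> a' b) (R a' b) (phi a x a')) = iR (\<sigma> a b) (R a b) x"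
  proof (rule order.antisym)
    show "(INF a'\<in>A. iR (\<sigma> a' b) (R a' b) (phi a x a')) \<le> iR (\<sigma> a b) (R a b) x"
      using a by (metis (mono_tags) INF_lower phi_def)
    show "iR (\<sigma> a b) (R a b) x \<le> (INF a'\<in>A. iR (\<sigma> a' b) (R a' b) (phi a x a'))"
      by (rule INF_greatest) (simp add: phi_def iR_bot b)
  qed
  then show ?thesis using b by (simp add: down_def)
qed

lemma ctop_M: "ctop A B \<in> M"
proof -
  have u: "upp (\<lambda>b. if b \<in> B then top else bot) = (\<lambda>a. bot)"
  proof
    fix a show "upp (\<lambda>b. if b \<in> B then top else bot) a = bot"
    proof (cases "a \<in> A")
      case True
      then obtain b2 where b2: "b2 \<in> B" "R a b2 = bot" using normalized unfolding normalized_context_def by blast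
      have "(INF b\<in>B. iL (\<sigma> a b) (R a b) (if b \<in> B then top else bot)) \<le> iL (\<sigma> a b2) (R a b2) (if b2 \<in> B then top else bot)"
        using b2(1) by (rule INF_lower)
      then show ?thesis using True b2 by (simp add: up_def iL_top bot_unique)
    qed (simp add: up_def)
  qed
  have d: "dn (\<lambda>a. bot) = (\<lambda>b. if b \<in> B then top else bot)"
    by (rule ext) (auto simp: down_def iR_bot)
  show ?thesis unfolding concepts_def ctop_def using u d by simp
qed

lemma cbot_M: "cbot A B \<in> M"
proof -
  have u: "dn (\<lambda>a. if a \<in> A then top else bot) = (\<lambda>b. bot)"
  proof
    fix b show "dn (\<lambda>a. if a \<in> A then top else bot) b = bot"
    proof (cases "b \<in> B")
      case True
      then obtain a2 where a2: "a2 \<in> A" "R a2 b = bot" using normalized unfolding normalized_context_def by blast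
      have "(INF a\<in>A. iR (\<sigma> a b) (R a b) (if a \<in> A then top else bot)) \<le> iR (\<sigma> a2 b) (R a2 b) (if a2 \<in> A then top else bot)"
        using a2(1) by (rule INF_lower)
      then show ?thesis using True a2 by (simp add: down_def iR_top bot_unique)
    qed (simp add: down_def)
  qed
  have d: "upp (\<lambda>b. bot) = (\<lambda>a. if a \<in> A then top else bot)"
    by (rule ext) (auto simp: up_def iL_bot)
  show ?thesis unfolding concepts_def cbot_def using u d by simp
qed

lemma le_ctop: "c \<in> M \<Longrightarrow> cleq c (ctop A B)"
  unfolding cleq_def ctop_def by (auto simp: le_fun_def M_fst_out)
lemma cbot_le: "cleq (cbot A B) c"
  unfolding cleq_def cbot_def by (auto simp: le_fun_def)

lemma ctop_le: "c \<in> M \<Longrightarrow> cleq (ctop A B) c \<Longrightarrow> c = ctop A B"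
  using cleq_antisym ctop_M le_ctop by blast
lemma le_cbot: "c \<in> M \<Longrightarrow> cleq c (cbot A B) \<Longrightarrow> c = cbot A B"
  using cleq_antisym cbot_M cbot_le by blast

lemma cleq_trans: "cleq x y \<Longrightarrow> cleq y z \<Longrightarrow> cleq x z"
  unfolding cleq_def by auto

lemma gam_bot: "a \<in> A \<Longrightarrow> gam a bot = ctop A B"
proof -
  assume a: "a \<in> A"
  have "fst (gam a bot) = fst (ctop A B)"
    by (rule ext) (auto simp: ctop_def dn_phi a iR_bot dn_out)
  then show ?thesis using M_eq gam_M ctop_M by blast
qed

lemma nonbot_fst: "c \<in> M \<Longrightarrow> c \<noteq> cbot A B \<Longrightarrow> \<exists>b\<in>B. fst c b \<noteq> bot"
proof (rule ccontr)
  assume c: "c \<in> M" "c \<noteq> cbot A B" "\<not> (\<exists>b\<in>B. fst c b \<noteq> bot)"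
  have "fst c = fst (cbot A B)"
  proof (rule ext)
    fix b show "fst c b = fst (cbot A B) b" using c M_fst_out[of c b] by (cases "b \<in> B") (auto simp: cbot_def)
  qed
  then show False using c M_eq cbot_M by blast
qed

lemma nontop_snd: "c \<in> M \<Longrightarrow> c \<noteq> ctop A B \<Longrightarrow> \<exists>a\<in>A. snd c a \<noteq> bot"
proof (rule ccontr)
  assume c: "c \<in> M" "c \<noteq> ctop A B" "\<not> (\<exists>a\<in>A. snd c a \<noteq> bot)"
  have "snd c = snd (ctop A B)"
  proof (rule ext)
    fix a show "snd c a = snd (ctop A B) a" using c M_snd_out[of c a] by (cases "a \<in> A") (auto simp: ctop_def)
  qed
  then have "fst c = fst (ctop A B)" using M_D c(1) ctop_M by metis
  then show False using c M_eq ctop_M by blast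
qed

lemma zero_lemma: "c \<in> M \<Longrightarrow> a \<in> A \<Longrightarrow> b \<in> B \<Longrightarrow> R a b = bot \<Longrightarrow> no_zero_divisors (cj (\<sigma> a b))
   \<Longrightarrow> snd c a = bot \<or> fst c b = bot"
proof -
  assume h: "c \<in> M" "a \<in> A" "b \<in> B" "R a b = bot" "no_zero_divisors (cj (\<sigma> a b))"
  have "snd c a \<le> iL (\<sigma> a b) (R a b) (fst c b)" using upp_le h M_D by metis
  then have "cj (\<sigma> a b) (snd c a) (fst c b) \<le> bot" using h adjL by metis
  then show ?thesis using h(5) unfolding no_zero_divisors_def by (metis bot.extremum_unique)
qed

lemma zero_obj: "a \<in> A \<Longrightarrow> b \<in> B \<Longrightarrow> R a b = bot \<Longrightarrow> no_zero_divisors (cj (\<sigma> a b)) \<Longrightarrow> x \<noteq> bot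
   \<Longrightarrow> fst (gam a x) b = bot"
proof -
  assume h: "a \<in> A" "b \<in> B" "R a b = bot" "no_zero_divisors (cj (\<sigma> a b))" "x \<noteq> bot"
  have "cj (\<sigma> a b) x (iR (\<sigma> a b) (R a b) x) \<le> bot" using h adjR by (metis order.refl)
  then show ?thesis using h unfolding no_zero_divisors_def by (simp add: dn_phi) (metis bot.extremum_unique)
qed

lemma glb_obj: "d \<in> M \<Longrightarrow> glb_in cleq M ((\<lambda>a. gam a (snd d a)) ` A) d"
  unfolding glb_in_def
proof (intro conjI ballI impI)
  assume d: "d \<in> M"
  then show "d \<in> M" .
  fix e assume "e \<in> (\<lambda>a. gam a (snd d a)) ` A"
  then obtain a where a: "a \<in> A" "e = gam a (snd d a)" by blast
  show "cleq d e" unfolding cleq_def le_fun_def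
  proof
    fix b show "fst d b \<le> fst e b"
      using a d by (cases "b \<in> B") (auto simp: dn_phi M_fst_out, metis M_D dn_le)
  qed
next
  fix e assume d: "d \<in> M" and e: "e \<in> M" and lb: "\<forall>x\<in>(\<lambda>a. gam a (snd d a)) ` A. cleq e x"
  show "cleq e d" unfolding cleq_def le_fun_def
  proof
    fix b show "fst e b \<le> fst d b"
    proof (cases "b \<in> B")
      case True
      have "\<forall>a\<in>A. fst e b \<le> iR (\<sigma> a b) (R a b) (snd d a)"
      proof
        fix a assume a: "a \<in> A"
        then have "cleq e (gam a (snd d a))" using lb by blast
        then have "fst e b \<le> dn (phi a (snd d a)) b" by (simp add: cleq_def le_fun_def)
        then show "fst e b \<le> iR (\<sigma> a b) (R a b) (snd d a)" using dn_phi[OF a True] by simp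
      qed
      then have "fst e b \<le> dn (snd d) b" using True by (simp add: down_def INF_greatest)
      then show ?thesis using M_D d by metis
    qed (simp add: M_fst_out e)
  qed
qed

definition T :: "('b \<Rightarrow> 'l) \<times> ('a \<Rightarrow> 'l) \<Rightarrow> (('b \<Rightarrow> 'l) \<times> ('a \<Rightarrow> 'l)) set" where
  "T d = {m. meet_irreducible_in cleq M (ctop A B) m \<and> (\<exists>a\<in>A. \<exists>x. m = gam a x) \<and> cleq d m}"

lemma cleq_refl: "cleq x x" unfolding cleq_def by simp

lemma rep_step:
  assumes d: "d \<in> M" and U: "glb_in cleq M U d" "U \<subseteq> M"
    and IH: "\<forall>u\<in>U. glb_in cleq M (T u) u"
  shows "glb_in cleq M (T d) d"
  unfolding glb_in_def
proof (intro conjI ballI impI)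
  show "d \<in> M" by fact
  fix m assume "m \<in> T d" then show "cleq d m" unfolding T_def by blast
next
  fix e assume e: "e \<in> M" and lb: "\<forall>m\<in>T d. cleq e m"
  have "cleq e u" if u: "u \<in> U" for u
  proof -
    have du: "cleq d u" using U u unfolding glb_in_def by blast
    have "T u \<subseteq> T d" unfolding T_def using du cleq_trans by blast
    then have "\<forall>m\<in>T u. cleq e m" using lb by blast
    then show ?thesis using IH u e unfolding glb_in_def by blast
  qed
  then show "cleq e d" using U e unfolding glb_in_def by blast
qed

lemma rep:
  assumes acc: "ascending_chain_condition cleq M"
  shows "d \<in> M \<Longrightarrow> glb_in cleq M (T d) d"
proof -
  define r where "r = {(u, d). u \<in> M \<and> d \<in> M \<and> cleq d u \<and> d \<noteq> u}"
  have wf: "wf r"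
    unfolding wf_iff_no_infinite_down_chain
  proof
    assume "\<exists>f. \<forall>i. (f (Suc i), f i) \<in> r"
    then obtain f where "\<forall>i. (f (Suc i), f i) \<in> r" by blast
    then have "\<forall>k. f k \<in> M \<and> cleq (f k) (f (Suc k)) \<and> f k \<noteq> f (Suc k)" unfolding r_def by blast
    then show False using acc unfolding ascending_chain_condition_def by blast
  qed
  show "d \<in> M \<Longrightarrow> glb_in cleq M (T d) d"
  proof (induction d rule: wf_induct_rule[OF wf])
    case (1 d)
    note d = 1(2)
    have IH: "\<And>U. glb_in cleq M U d \<Longrightarrow> U \<subseteq> M \<Longrightarrow> d \<notin> U \<Longrightarrow> \<forall>u\<in>U. glb_in cleq M (T u) u"
    proof
      fix U u assume U: "glb_in cleq M U d" "U \<subseteq> M" "d \<notin> U" and u: "u \<in> U"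
      have "(u, d) \<in> r" unfolding r_def using U u d unfolding glb_in_def by auto
      then show "glb_in cleq M (T u) u" using 1(1) U u by blast
    qed
    show ?case
    proof (cases "d = ctop A B")
      case True
      show ?thesis unfolding glb_in_def T_def using d True le_ctop by blast
    next
      case ntop: False
      show ?thesis
      proof (cases "d \<in> T d")
        case True
        show ?thesis unfolding glb_in_def using d True unfolding T_def by blast
      next
        case nT: False
        show ?thesis
        proof (cases "meet_irreducible_in cleq M (ctop A B) d")
          case False
          then obtain p q where pq: "p \<in> M" "q \<in> M" "glb_in cleq M {p, q} d" "d \<noteq> p" "d \<noteq> q"
            using d ntop unfolding meet_irreducible_in_def by blast
          show ?thesis by (rule rep_step[OF d pq(3)]) (use pq IH in auto)
        next
          case True
          then have nobj: "\<not> (\<exists>a\<in>A. \<exists>x. d = gam a x)" using nT cleq_refl unfolding T_def by blast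
          let ?U = "(\<lambda>a. gam a (snd d a)) ` A"
          have "?U \<subseteq> M" using gam_M by blast
          moreover have "d \<notin> ?U" using nobj by blast
          ultimately show ?thesis using rep_step[OF d glb_obj[OF d]] IH glb_obj[OF d] by blast
        qed
      qed
    qed
  qed
qed

end

locale gdec = gcl n cj iL iR A B R \<sigma>
  for n :: nat
    and cj iL iR :: "nat \<Rightarrow> 'l::complete_lattice \<Rightarrow> 'l \<Rightarrow> 'l"
    and A :: "'a set" and B :: "'b set"
    and R :: "'a \<Rightarrow> 'b \<Rightarrow> 'l" and \<sigma> :: "'a \<Rightarrow> 'b \<Rightarrow> nat" +
  fixes \<Lambda> :: "'i set" and AL :: "'i \<Rightarrow> 'a set" and BL :: "'i \<Rightarrow> 'b set"
  assumes acc: "ascending_chain_condition cleq (concepts iL iR A B R \<sigma>)"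
    and decomp: "independent_subcontext_decomposition cj A B R \<sigma> \<Lambda> AL BL"
begin

lemma D1: "\<Lambda> \<noteq> {}" using decomp unfolding independent_subcontext_decomposition_def by blast
lemma D2: "l \<in> \<Lambda> \<Longrightarrow> separable_subcontext A B R (AL l) (BL l)"
  using decomp unfolding independent_subcontext_decomposition_def by blast
lemma DA: "(\<Union>l\<in>\<Lambda>. AL l) = A" using decomp unfolding independent_subcontext_decomposition_def by blast
lemma DB: "(\<Union>l\<in>\<Lambda>. BL l) = B" using decomp unfolding independent_subcontext_decomposition_def by blast
lemma DAd: "l \<in> \<Lambda> \<Longrightarrow> m \<in> \<Lambda> \<Longrightarrow> l \<noteq> m \<Longrightarrow> AL l \<inter> AL m = {}"
  using decomp unfolding independent_subcontext_decomposition_def by blast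
lemma DBd: "l \<in> \<Lambda> \<Longrightarrow> m \<in> \<Lambda> \<Longrightarrow> l \<noteq> m \<Longrightarrow> BL l \<inter> BL m = {}"
  using decomp unfolding independent_subcontext_decomposition_def by blast
lemma Dz1: "l \<in> \<Lambda> \<Longrightarrow> a \<in> A - AL l \<Longrightarrow> b \<in> BL l \<Longrightarrow> no_zero_divisors (cj (\<sigma> a b))"
  using decomp unfolding independent_subcontext_decomposition_def by blast
lemma Dz2: "l \<in> \<Lambda> \<Longrightarrow> a \<in> AL l \<Longrightarrow> b \<in> B - BL l \<Longrightarrow> no_zero_divisors (cj (\<sigma> a b))"
  using decomp unfolding independent_subcontext_decomposition_def by blast
lemma SA: "l \<in> \<Lambda> \<Longrightarrow> AL l \<subset> A" using D2 unfolding separable_subcontext_def by blast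
lemma SB: "l \<in> \<Lambda> \<Longrightarrow> BL l \<subset> B" using D2 unfolding separable_subcontext_def by blast
lemma SR1: "l \<in> \<Lambda> \<Longrightarrow> a \<in> AL l \<Longrightarrow> b \<in> B - BL l \<Longrightarrow> R a b = bot"
  using D2 unfolding separable_subcontext_def by blast
lemma SR2: "l \<in> \<Lambda> \<Longrightarrow> a \<in> A - AL l \<Longrightarrow> b \<in> BL l \<Longrightarrow> R a b = bot"
  using D2 unfolding separable_subcontext_def by blast

definition Q where "Q l = {c \<in> M. c \<noteq> ctop A B \<and> c \<noteq> cbot A B \<and> (\<exists>b\<in>BL l. fst c b \<noteq> bot)}"

lemma L_exist: "c \<in> M \<Longrightarrow> c \<noteq> ctop A B \<Longrightarrow> c \<noteq> cbot A B \<Longrightarrow> \<exists>l\<in>\<Lambda>. c \<in> Q l"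
proof -
  assume c: "c \<in> M" "c \<noteq> ctop A B" "c \<noteq> cbot A B"
  then obtain b where b: "b \<in> B" "fst c b \<noteq> bot" using nonbot_fst by blast
  then obtain l where "l \<in> \<Lambda>" "b \<in> BL l" using DB by blast
  then show ?thesis using c b unfolding Q_def by blast
qed

lemma L_uniq: "l \<in> \<Lambda> \<Longrightarrow> m \<in> \<Lambda> \<Longrightarrow> c \<in> Q l \<Longrightarrow> c \<in> Q m \<Longrightarrow> l = m"
proof -
  assume lm: "l \<in> \<Lambda>" "m \<in> \<Lambda>" and cl: "c \<in> Q l" and cm: "c \<in> Q m"
  have c: "c \<in> M" "c \<noteq> ctop A B" using cl unfolding Q_def by auto
  then obtain a where a: "a \<in> A" "snd c a \<noteq> bot" using nontop_snd by blast
  then obtain v where v: "v \<in> \<Lambda>" "a \<in> AL v" using DA by blast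
  have key: "k = v" if k: "k \<in> \<Lambda>" "b \<in> BL k" "fst c b \<noteq> bot" for k b
  proof (rule ccontr)
    assume kv: "k \<noteq> v"
    have bB: "b \<in> B" using SB k by blast
    have "b \<notin> BL v" using DBd[OF k(1) v(1) kv] k by blast
    then have "R a b = bot" "no_zero_divisors (cj (\<sigma> a b))" using SR1[OF v] Dz2[OF v] v bB by auto
    then show False using zero_lemma[OF c(1) a(1) bB] a k by blast
  qed
  obtain b where "b \<in> BL l" "fst c b \<noteq> bot" using cl unfolding Q_def by blast
  then have "l = v" using key lm by blast
  moreover obtain b' where "b' \<in> BL m" "fst c b' \<noteq> bot" using cm unfolding Q_def by blast
  then have "m = v" using key lm by blast
  ultimately show ?thesis by simp
qed

lemma L_up: "c \<in> Q l \<Longrightarrow> d \<in> M \<Longrightarrow> cleq c d \<Longrightarrow> d \<noteq> ctop A B \<Longrightarrow> d \<in> Q l"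
proof -
  assume h: "c \<in> Q l" "d \<in> M" "cleq c d" "d \<noteq> ctop A B"
  then obtain b where b: "b \<in> BL l" "fst c b \<noteq> bot" unfolding Q_def by blast
  have "fst c b \<le> fst d b" using h(3) unfolding cleq_def le_fun_def by blast
  then have "fst d b \<noteq> bot" using b bot_unique by metis
  moreover have "d \<noteq> cbot A B"
  proof
    assume "d = cbot A B"
    then have "cleq c (cbot A B)" using h by simp
    moreover have "c \<in> M" using h unfolding Q_def by blast
    ultimately have "c = cbot A B" using le_cbot by blast
    then show False using h unfolding Q_def by blast
  qed
  ultimately show ?thesis using h b unfolding Q_def by blast
qed

lemma L_down: "l \<in> \<Lambda> \<Longrightarrow> c \<in> Q l \<Longrightarrow> d \<in> M \<Longrightarrow> cleq d c \<Longrightarrow> d \<noteq> cbot A B \<Longrightarrow> d \<in> Q l"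
proof -
  assume h: "l \<in> \<Lambda>" "c \<in> Q l" "d \<in> M" "cleq d c" "d \<noteq> cbot A B"
  have cM: "c \<in> M" "c \<noteq> ctop A B" using h unfolding Q_def by auto
  have "d \<noteq> ctop A B"
  proof
    assume "d = ctop A B"
    then have "c = ctop A B" using h cM ctop_le by auto
    then show False using cM by blast
  qed
  then obtain m where m: "m \<in> \<Lambda>" "d \<in> Q m" using L_exist h by blast
  then have "c \<in> Q m" using L_up cM h by blast
  then have "m = l" using L_uniq m h by blast
  then show ?thesis using m by simp
qed

lemma top_ne_bot: "(top::'l) \<noteq> bot"
proof -
  obtain l where l: "l \<in> \<Lambda>" using D1 by blast
  then obtain a b where "R a b \<noteq> bot" using D2 unfolding separable_subcontext_def by blast
  then show ?thesis by (metis bot_unique top_greatest)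
qed

lemma L_nonempty: "l \<in> \<Lambda> \<Longrightarrow> Q l \<noteq> {}"
proof -
  assume l: "l \<in> \<Lambda>"
  then obtain a b where ab: "a \<in> AL l" "b \<in> BL l" "R a b \<noteq> bot" using D2 unfolding separable_subcontext_def by blast
  have aA: "a \<in> A" and bB: "b \<in> B" using ab SA SB l by auto
  obtain b' where b': "b' \<in> B - BL l" using SB l by blast
  let ?c = "gam a top"
  have cM: "?c \<in> M" by (rule gam_M)
  have fb: "fst ?c b = R a b" using dn_phi[OF aA bB] iR_top[OF aA bB] by simp
  have fb': "fst ?c b' = bot" using dn_phi[OF aA, of b'] iR_top[OF aA, of b'] b' SR1[OF l ab(1) b'] by simp
  have "?c \<noteq> cbot A B" using fb ab(3) by (auto simp: cbot_def)
  moreover have "?c \<noteq> ctop A B" using fb' b' top_ne_bot by (auto simp: ctop_def)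
  moreover have "\<exists>b\<in>BL l. fst ?c b \<noteq> bot" using fb ab by metis
  ultimately have "?c \<in> Q l" using cM unfolding Q_def by blast
  then show ?thesis by blast
qed

lemma L_K: "l \<in> \<Lambda> \<Longrightarrow> Kset iL iR A B R \<sigma> (AL l) = Q l \<union> {ctop A B, cbot A B}"
proof -
  assume l: "l \<in> \<Lambda>"
  have sub1: "gf \<in> Q l" if gf: "gf \<in> M" "glb_in cleq M (Mg iL iR A B R \<sigma> (AL l) gf) gf"
     "gf \<noteq> ctop A B" "gf \<noteq> cbot A B" for gf
  proof -
    have "Mg iL iR A B R \<sigma> (AL l) gf \<noteq> {}"
    proof
      assume "Mg iL iR A B R \<sigma> (AL l) gf = {}"
      then have "cleq (ctop A B) gf" using gf(2) ctop_M unfolding glb_in_def by blast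
      then show False using ctop_le gf by blast
    qed
    then obtain m where m: "m \<in> MF iL iR A B R \<sigma> (AL l)" "cleq gf m" unfolding Mg_def by blast
    then obtain a x where ax: "a \<in> AL l" "m = gam a x" "meet_irreducible_in cleq M (ctop A B) m"
      unfolding MF_def by blast
    have aA: "a \<in> A" using ax SA l by blast
    have x: "x \<noteq> bot"
    proof
      assume "x = bot"
      then have "m = ctop A B" using ax gam_bot aA by simp
      then show False using ax unfolding meet_irreducible_in_def by blast
    qed
    obtain b where b: "b \<in> B" "fst gf b \<noteq> bot" using nonbot_fst gf by blast
    have "b \<in> BL l"
    proof (rule ccontr)
      assume "b \<notin> BL l"
      then have "fst m b = bot" using zero_obj[OF aA b(1) SR1[OF l ax(1)] Dz2[OF l ax(1)] x] b ax by simp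
      moreover have "fst gf b \<le> fst m b" using m(2) unfolding cleq_def le_fun_def by blast
      ultimately show False using b bot_unique by metis
    qed
    then show ?thesis using gf b unfolding Q_def by blast
  qed
  have sub2: "glb_in cleq M (Mg iL iR A B R \<sigma> (AL l) c) c" if c: "c \<in> Q l" for c
  proof -
    have cM: "c \<in> M" using c unfolding Q_def by blast
    obtain b where b: "b \<in> BL l" "fst c b \<noteq> bot" using c unfolding Q_def by blast
    have bB: "b \<in> B" using b SB l by blast
    have "Mg iL iR A B R \<sigma> (AL l) c = T c"
    proof
      show "Mg iL iR A B R \<sigma> (AL l) c \<subseteq> T c"
        unfolding Mg_def MF_def T_def using SA[OF l] by blast
      show "T c \<subseteq> Mg iL iR A B R \<sigma> (AL l) c"
      proof
        fix m assume "m \<in> T c"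
        then obtain a x where ax: "a \<in> A" "m = gam a x" "meet_irreducible_in cleq M (ctop A B) m" "cleq c m"
          unfolding T_def by blast
        have x: "x \<noteq> bot"
        proof
          assume "x = bot"
          then have "m = ctop A B" using ax gam_bot by simp
          then show False using ax unfolding meet_irreducible_in_def by blast
        qed
        have "a \<in> AL l"
        proof (rule ccontr)
          assume "a \<notin> AL l"
          then have aa: "a \<in> A - AL l" using ax by blast
          have "fst m b = bot" using zero_obj[OF ax(1) bB SR2[OF l aa b(1)] Dz1[OF l aa b(1)] x] ax by simp
          moreover have "fst c b \<le> fst m b" using ax(4) unfolding cleq_def le_fun_def by blast
          ultimately show False using b bot_unique by metis
        qed
        then show "m \<in> Mg iL iR A B R \<sigma> (AL l) c" using ax unfolding Mg_def MF_def by blast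
      qed
    qed
    then show ?thesis using rep[OF acc cM] by simp
  qed
  show ?thesis
  proof
    show "Kset iL iR A B R \<sigma> (AL l) \<subseteq> Q l \<union> {ctop A B, cbot A B}"
      unfolding Kset_def using sub1 by blast
    show "Q l \<union> {ctop A B, cbot A B} \<subseteq> Kset iL iR A B R \<sigma> (AL l)"
      unfolding Kset_def using sub2 unfolding Q_def by blast
  qed
qed

lemma Q_M: "Q l \<subseteq> M" unfolding Q_def by blast
lemma Q_ext: "c \<in> Q l \<Longrightarrow> c \<noteq> ctop A B \<and> c \<noteq> cbot A B" unfolding Q_def by blast

lemma L_block: "l \<in> \<Lambda> \<Longrightarrow> block_in cleq M (cbot A B) (ctop A B) (Q l \<union> {ctop A B, cbot A B})"
proof -
  assume l: "l \<in> \<Lambda>"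
  let ?K = "Q l \<union> {ctop A B, cbot A B}"
  have KM: "?K \<subseteq> M" using Q_M ctop_M cbot_M by blast
  have glb: "z \<in> ?K" if xy: "x \<in> ?K" "y \<in> ?K" and z: "glb_in cleq M {x, y} z" for x y z
  proof -
    have zM: "z \<in> M" and zx: "cleq z x" and zy: "cleq z y"
      and gr: "\<forall>e\<in>M. cleq e x \<and> cleq e y \<longrightarrow> cleq e z" using z unfolding glb_in_def by auto
    show ?thesis
    proof (cases "z = ctop A B \<or> z = cbot A B")
      case True then show ?thesis by blast
    next
      case False
      show ?thesis
      proof (cases "x \<in> Q l \<or> y \<in> Q l")
        case True
        then show ?thesis using L_down[OF l _ zM] zx zy False by blast
      next
        case nq: False
        then have "x \<in> {ctop A B, cbot A B}" "y \<in> {ctop A B, cbot A B}" using xy by auto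
        then show ?thesis
        proof (elim insertE emptyE)
          assume "x = ctop A B" "y = ctop A B"
          then have "cleq (ctop A B) z" using gr ctop_M cleq_refl by blast
          then show ?thesis using ctop_le zM by blast
        qed (use zx zy le_cbot zM in auto)
      qed
    qed
  qed
  have lub: "z \<in> ?K" if xy: "x \<in> ?K" "y \<in> ?K" and z: "lub_in cleq M {x, y} z" for x y z
  proof -
    have zM: "z \<in> M" and zx: "cleq x z" and zy: "cleq y z"
      and gr: "\<forall>e\<in>M. cleq x e \<and> cleq y e \<longrightarrow> cleq z e" using z unfolding lub_in_def by auto
    show ?thesis
    proof (cases "z = ctop A B \<or> z = cbot A B")
      case True then show ?thesis by blast
    next
      case False
      show ?thesis
      proof (cases "x \<in> Q l \<or> y \<in> Q l")
        case True
        then show ?thesis using L_up[OF _ zM] zx zy False by blast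
      next
        case nq: False
        then have "x \<in> {ctop A B, cbot A B}" "y \<in> {ctop A B, cbot A B}" using xy by auto
        then show ?thesis
        proof (elim insertE emptyE)
          assume "x = cbot A B" "y = cbot A B"
          then have "cleq z (cbot A B)" using gr cbot_M cleq_refl by blast
          then show ?thesis using le_cbot zM by blast
        qed (use zx zy ctop_le zM in auto)
      qed
    qed
  qed
  have sub: "sublattice_in cleq M ?K" unfolding sublattice_in_def
  proof (intro conjI KM ballI allI impI)
    fix x y z assume "x \<in> ?K" "y \<in> ?K" "glb_in cleq M {x, y} z" then show "z \<in> ?K" by (rule glb)
  next
    fix x y z assume "x \<in> ?K" "y \<in> ?K" "lub_in cleq M {x, y} z" then show "z \<in> ?K" by (rule lub)
  qed
  obtain a where a: "a \<in> A - AL l" using SA[OF l] by blast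
  then obtain m where m: "m \<in> \<Lambda>" "a \<in> AL m" using DA by blast
  have ml: "m \<noteq> l" using m a by blast
  obtain c where c: "c \<in> Q m" using L_nonempty[OF m(1)] by blast
  have cnq: "c \<notin> Q l"
  proof
    assume "c \<in> Q l"
    then have "l = m" using L_uniq[OF l m(1)] c by blast
    then show False using ml by simp
  qed
  have cK: "c \<notin> ?K" using cnq Q_ext[OF c] by blast
  have cM: "c \<in> M" using c Q_M by blast
  have strict: "?K \<subset> M"
  proof (rule psubsetI[OF KM])
    show "?K \<noteq> M" using cK cM by metis
  qed
  obtain c' where c': "c' \<in> Q l" using L_nonempty[OF l] by blast
  then have "c' \<in> ?K - {cbot A B, ctop A B}" using Q_ext[OF c'] by blast
  then have ne: "?K - {cbot A B, ctop A B} \<noteq> {}" by blast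
  have cond: "\<forall>k\<in>?K - {cbot A B, ctop A B}. ({x\<in>M. cleq k x} \<union> {x\<in>M. cleq x k}) - {cbot A B, ctop A B} \<subseteq> ?K"
  proof (intro ballI subsetI)
    fix k x assume k: "k \<in> ?K - {cbot A B, ctop A B}" and x: "x \<in> ({x\<in>M. cleq k x} \<union> {x\<in>M. cleq x k}) - {cbot A B, ctop A B}"
    have kq: "k \<in> Q l" using k by blast
    have xM: "x \<in> M" and xn: "x \<noteq> cbot A B" "x \<noteq> ctop A B" and xc: "cleq k x \<or> cleq x k"
      using x by auto
    from xc have "x \<in> Q l"
    proof
      assume "cleq k x" then show ?thesis using L_up[OF kq xM] xn by blast
    next
      assume "cleq x k" then show ?thesis using L_down[OF l kq xM] xn by blast
    qed
    then show "x \<in> ?K" by blast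
  qed
  show ?thesis unfolding block_in_def by (intro conjI sub strict ne cond)
qed

lemma L_indep: "l \<in> \<Lambda> \<Longrightarrow> m \<in> \<Lambda> \<Longrightarrow> l \<noteq> m \<Longrightarrow>
   independent_blocks (cbot A B) (ctop A B) (Q l \<union> {ctop A B, cbot A B}) (Q m \<union> {ctop A B, cbot A B})"
  unfolding independent_blocks_def using L_uniq Q_ext by blast

lemma L_union: "(\<Union>l\<in>\<Lambda>. Q l \<union> {ctop A B, cbot A B}) = M"
proof
  show "(\<Union>l\<in>\<Lambda>. Q l \<union> {ctop A B, cbot A B}) \<subseteq> M" using Q_M ctop_M cbot_M by blast
  show "M \<subseteq> (\<Union>l\<in>\<Lambda>. Q l \<union> {ctop A B, cbot A B})"
  proof
    fix c assume c: "c \<in> M"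
    show "c \<in> (\<Union>l\<in>\<Lambda>. Q l \<union> {ctop A B, cbot A B})"
    proof (cases "c = ctop A B \<or> c = cbot A B")
      case True then show ?thesis using D1 by blast
    next
      case False then show ?thesis using L_exist c by blast
    qed
  qed
qed

lemma final: "block_decomposition_family cleq M (cbot A B) (ctop A B) \<Lambda> (\<lambda>l. Kset iL iR A B R \<sigma> (AL l))"
  unfolding block_decomposition_family_def
proof (intro conjI ballI impI)
  fix l assume l: "l \<in> \<Lambda>"
  show "block_in cleq M (cbot A B) (ctop A B) (Kset iL iR A B R \<sigma> (AL l))"
    unfolding L_K[OF l] by (rule L_block[OF l])
next
  fix l m assume l: "l \<in> \<Lambda>" and m: "m \<in> \<Lambda>" and lm: "l \<noteq> m"
  show "independent_blocks (cbot A B) (ctop A B) (Kset iL iR A B R \<sigma> (AL l)) (Kset iL iR A B R \<sigma> (AL m))"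
    unfolding L_K[OF l] L_K[OF m] by (rule L_indep[OF l m lm])
next
  have "(\<Union>l\<in>\<Lambda>. Kset iL iR A B R \<sigma> (AL l)) = (\<Union>l\<in>\<Lambda>. Q l \<union> {ctop A B, cbot A B})"
    by (rule SUP_cong) (simp_all add: L_K)
  then show "(\<Union>l\<in>\<Lambda>. Kset iL iR A B R \<sigma> (AL l)) = M" using L_union by simp
qed

lemma final2: "has_block_decomposition cleq M (cbot A B) (ctop A B)"
proof -
  let ?F = "\<lambda>l. Kset iL iR A B R \<sigma> (AL l)"
  have f: "block_decomposition_family cleq M (cbot A B) (ctop A B) \<Lambda> ?F" by (rule final)
  have b: "\<forall>K\<in>?F ` \<Lambda>. block_in cleq M (cbot A B) (ctop A B) K"
    using f unfolding block_decomposition_family_def by blast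
  have i: "\<forall>K1\<in>?F ` \<Lambda>. \<forall>K2\<in>?F ` \<Lambda>. K1 \<noteq> K2 \<longrightarrow> independent_blocks (cbot A B) (ctop A B) K1 K2"
  proof (intro ballI impI)
    fix K1 K2 assume "K1 \<in> ?F ` \<Lambda>" "K2 \<in> ?F ` \<Lambda>" "K1 \<noteq> K2"
    then obtain l m where "l \<in> \<Lambda>" "m \<in> \<Lambda>" "K1 = ?F l" "K2 = ?F m" "l \<noteq> m" by blast
    then show "independent_blocks (cbot A B) (ctop A B) K1 K2"
      using f unfolding block_decomposition_family_def by blast
  qed
  have u: "\<Union> (?F ` \<Lambda>) = M" using f unfolding block_decomposition_family_def by blast
  show ?thesis unfolding has_block_decomposition_def using b i u by blast
qed

end

theorem theorem32:
  fixes n :: nat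
    and cj iL iR :: "nat \<Rightarrow> 'l::complete_lattice \<Rightarrow> 'l \<Rightarrow> 'l"
    and A :: "'a set" and B :: "'b set"
    and R :: "'a \<Rightarrow> 'b \<Rightarrow> 'l" and \<sigma> :: "'a \<Rightarrow> 'b \<Rightarrow> nat"
    and \<Lambda> :: "'i set" and AL :: "'i \<Rightarrow> 'a set" and BL :: "'i \<Rightarrow> 'b set"
  assumes adj: "\<forall>i\<in>{1..n}. adjoint_triple (cj i) (iL i) (iR i)"
    and unit: "\<forall>i\<in>{1..n}. \<forall>x. cj i x top = x \<and> cj i top x = x"
    and nonempty: "A \<noteq> {}" "B \<noteq> {}"
    and sigma_range: "\<forall>a\<in>A. \<forall>b\<in>B. \<sigma> a b \<in> {1..n}"
    and normalized: "normalized_context A B R"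
    and acc: "ascending_chain_condition cleq (concepts iL iR A B R \<sigma>)"
    and decomp: "independent_subcontext_decomposition cj A B R \<sigma> \<Lambda> AL BL"
  shows "has_block_decomposition cleq (concepts iL iR A B R \<sigma>) (cbot A B) (ctop A B)
     \<and> block_decomposition_family cleq (concepts iL iR A B R \<sigma>) (cbot A B) (ctop A B)
          \<Lambda> (\<lambda>l. Kset iL iR A B R \<sigma> (AL l))"
proof -
  interpret gdec n cj iL iR A B R \<sigma> \<Lambda> AL BL
    by unfold_locales (use adj unit sigma_range normalized acc decomp in auto)
  show ?thesis using final final2 by blast
qed

end
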